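(* For every $\lambda>0$, the function $\tilde J_\lambda$ is strictly convex on $\mathfrak B_+^o\times\mathfrak B_+^m(E)$.
   Context: Let $m,n$ be positive integers, $V=\{1,\dots,m\}$, and $E\subseteq V\times V$ a symmetric set containing $(j,j)$ for all $j\in V$. Let $\mathbb T=[0,2\pi)$ and write $\int_{\mathbb T}f$ for $\int_0^{2\pi}f(\theta)\,\frac{d\theta}{2\pi}$. $\mathfrak B_+^m(E)$ is the set of matrix trigonometric polynomials $\mathbf Q(e^{i\theta})=Q_0+\frac12\sum_{k=1}^n\big(Q_ke^{-i\theta k}+Q_k^Te^{i\theta k}\big)$ with $Q_0\in\mathbb R^{m\times m}$ symmetric, $Q_1,\dots,Q_n\in\mathbb R^{m\times m}$, $[Q_k]_{jh}=0$ for all $k$ and all $(j,h)\notin E$, and $\mathbf Q(e^{i\theta})$ positive definite for every $\theta\in\mathbb T$. $\mathfrak B_+^o$ is the set of scalar trigonometric polynomials $\mathbf p(e^{i\theta})=1+\frac12\sum_{k=1}^n p_k(e^{-i\theta k}+e^{i\theta k})$, $p_k\in\mathbb R$, with $\mathbf p(e^{i\theta})>0$ for all $\theta$. Set $p_0=1$. Both sets are viewed as subsets of the finite-dimensional space of coefficients. Data: real $m\times m$ matrices $R_0,\dots,R_n$ ($R_0$ symmetric) and real numbers $c_0,\dots,c_n$. Define $$J(\mathbf p,\mathbf Q)=\int_{\mathbb T}\Big(\mathbf p\log\det(\mathbf p\mathbf Q^{-1})-m\mathbf p\Big)+\sum_{k=0}^n\mathrm{tr}(Q_k^TR_k)-\sum_{k=0}^np_kc_k,$$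 $g_\lambda(\mathbf p)=\lambda\int_{\mathbb T}\mathbf p^{-1}$, and $\tilde J_\lambda=J+g_\lambda$. *)

theory Defs
  imports "HOL-Analysis.Analysis"
begin

definition circ_int :: "(real \<Rightarrow> real) \<Rightarrow> real" where
  "circ_int f = integral {0..2*pi} f / (2*pi)"

definition trig_p :: "nat \<Rightarrow> (nat \<Rightarrow> real) \<Rightarrow> real \<Rightarrow> real" where
  "trig_p n p \<theta> = Re (1 + (1/2) * (\<Sum>k\<in>{1..n}. complex_of_real (p k) *
      (exp (- \<i> * complex_of_real (\<theta> * real k)) + exp (\<i> * complex_of_real (\<theta> * real k)))))"

definition trig_Q :: "nat \<Rightarrow> (nat \<Rightarrow> real^'m^'m) \<Rightarrow> real \<Rightarrow> complex^'m^'m" where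
  "trig_Q n Q \<theta> = (\<chi> i j. complex_of_real (Q 0 $ i $ j) + (1/2) * (\<Sum>k\<in>{1..n}.
      complex_of_real (Q k $ i $ j) * exp (- \<i> * complex_of_real (\<theta> * real k))
    + complex_of_real (transpose (Q k) $ i $ j) * exp (\<i> * complex_of_real (\<theta> * real k))))"

definition cpos_def :: "complex^'m^'m \<Rightarrow> bool" where
  "cpos_def M \<longleftrightarrow> (\<forall>i j. M $ i $ j = cnj (M $ j $ i)) \<and>
     (\<forall>v :: complex^'m. v \<noteq> 0 \<longrightarrow> 0 < Re (\<Sum>i\<in>UNIV. cnj (v $ i) * (M *v v) $ i))"

definition Bo :: "nat \<Rightarrow> (nat \<Rightarrow> real) set" where
  "Bo n = {p. p 0 = 1 \<and> (\<forall>k>n. p k = 0) \<and> (\<forall>\<theta>\<in>{0..<2*pi}. trig_p n p \<theta> > 0)}"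

definition Bm :: "nat \<Rightarrow> ('m \<times> 'm) set \<Rightarrow> (nat \<Rightarrow> real^'m^'m) set" where
  "Bm n E = {Q. transpose (Q 0) = Q 0 \<and> (\<forall>k>n. Q k = 0) \<and>
      (\<forall>k\<le>n. \<forall>j h. (j, h) \<notin> E \<longrightarrow> Q k $ j $ h = 0) \<and>
      (\<forall>\<theta>\<in>{0..<2*pi}. cpos_def (trig_Q n Q \<theta>))}"

definition J :: "nat \<Rightarrow> (nat \<Rightarrow> real^'m^'m) \<Rightarrow> (nat \<Rightarrow> real)
      \<Rightarrow> (nat \<Rightarrow> real) \<times> (nat \<Rightarrow> real^'m^'m) \<Rightarrow> real" where
  "J n R c pQ = (let p = fst pQ; Q = snd pQ in
     circ_int (\<lambda>\<theta>. trig_p n p \<theta> * ln (Re (det (trig_p n p \<theta> *\<^sub>R matrix_inv (trig_Q n Q \<theta>))))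
                   - real CARD('m) * trig_p n p \<theta>)
     + (\<Sum>k\<le>n. trace (transpose (Q k) ** R k)) - (\<Sum>k\<le>n. p k * c k))"

definition g :: "nat \<Rightarrow> real \<Rightarrow> (nat \<Rightarrow> real) \<Rightarrow> real" where
  "g n lam p = lam * circ_int (\<lambda>\<theta>. 1 / trig_p n p \<theta>)"

definition J_tilde :: "nat \<Rightarrow> (nat \<Rightarrow> real^'m^'m) \<Rightarrow> (nat \<Rightarrow> real) \<Rightarrow> real
      \<Rightarrow> (nat \<Rightarrow> real) \<times> (nat \<Rightarrow> real^'m^'m) \<Rightarrow> real" where
  "J_tilde n R c lam pQ = J n R c pQ + g n lam (fst pQ)"

definition strict_convex_on_coeffs ::
  "((nat \<Rightarrow> real) \<times> (nat \<Rightarrow> real^'m^'m)) set \<Rightarrow> ((nat \<Rightarrow> real) \<times> (nat \<Rightarrow> real^'m^'m) \<Rightarrow> real) \<Rightarrow> bool" where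
  "strict_convex_on_coeffs S f \<longleftrightarrow> (\<forall>x\<in>S. \<forall>y\<in>S. x \<noteq> y \<longrightarrow> (\<forall>t::real. 0 < t \<and> t < 1 \<longrightarrow>
     f (\<lambda>k. (1 - t) * fst x k + t * fst y k, \<lambda>k. (1 - t) *\<^sub>R snd x k + t *\<^sub>R snd y k)
       < (1 - t) * f x + t * f y))"

end

theory Submission
  imports Defs "HOL-Computational_Algebra.Fundamental_Theorem_Algebra"
begin

definition sesq :: "complex^'m^'m \<Rightarrow> complex^'m \<Rightarrow> complex^'m \<Rightarrow> complex" where
  "sesq M u v = (\<Sum>i\<in>UNIV. cnj (u $ i) * (M *v v) $ i)"

definition herm :: "complex^'m^'m \<Rightarrow> bool" where
  "herm M \<longleftrightarrow> (\<forall>i j. M $ i $ j = cnj (M $ j $ i))"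

definition Mz :: "complex^'m^'m \<Rightarrow> complex^'m^'m \<Rightarrow> complex \<Rightarrow> complex^'m^'m" where
  "Mz A D z = (\<chi> i j. A $ i $ j + z * D $ i $ j)"

definition PMat :: "complex^'m^'m \<Rightarrow> complex^'m^'m \<Rightarrow> complex poly^'m^'m" where
  "PMat A D = (\<chi> i j. [:A $ i $ j, D $ i $ j:])"

lemma cpos_iff: "cpos_def M \<longleftrightarrow> herm M \<and> (\<forall>v. v \<noteq> 0 \<longrightarrow> 0 < Re (sesq M v v))"
  unfolding cpos_def_def herm_def sesq_def by simp

lemma poly_det: "poly (det (M :: complex poly^'m^'m)) z = det (\<chi> i j. poly (M $ i $ j) z)"
  unfolding det_def by (simp add: poly_sum poly_prod of_int_poly)

lemma poly_det_PMat: "poly (det (PMat A D)) z = det (Mz A D z)"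
  unfolding poly_det PMat_def Mz_def by simp

lemma cnj_det: "cnj (det (M :: complex^'m^'m)) = det (\<chi> i j. cnj (M $ i $ j))"
  unfolding det_def by (simp add: cnj_sum cnj_prod)

lemma sesq_expand: "sesq M v u = (\<Sum>i\<in>UNIV. \<Sum>j\<in>UNIV. cnj (v$i) * M$i$j * u$j)"
  by (simp add: sesq_def matrix_vector_mult_def sum_distrib_left mult.assoc)

lemma sesq_herm: assumes "herm M" shows "sesq M v u = cnj (sesq M u v)"
proof -
  have "cnj (sesq M u v) = (\<Sum>i\<in>UNIV. \<Sum>j\<in>UNIV. cnj (cnj (u$i) * M$i$j * v$j))"
    unfolding sesq_expand cnj_sum ..
  also have "\<dots> = (\<Sum>i\<in>UNIV. \<Sum>j\<in>UNIV. cnj (v$j) * M$j$i * u$i)"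
    using assms unfolding herm_def
    by (intro sum.cong refl) (metis complex_cnj_cnj complex_cnj_mult mult.commute mult.left_commute)
  also have "\<dots> = sesq M v u"
    unfolding sesq_expand by (rule sum.swap)
  finally show ?thesis by simp
qed

lemma qf_real: "herm M \<Longrightarrow> Im (sesq M v v) = 0"
  using sesq_herm[of M v v] by (metis cnj.simps(2) complex_cnj_cancel_iff neg_equal_zero)

lemma Mz_mult: "Mz A D z *v v = A *v v + z *s (D *v v)"
  unfolding vec_eq_iff
  by (simp add: Mz_def matrix_vector_mult_def sum.distrib sum_distrib_left distrib_right mult.assoc)

lemma sesq_add_mat: "sesq (A + B) u v = sesq A u v + sesq B u v"
  by (simp add: sesq_def matrix_vector_mult_def sum.distrib algebra_simps matrix_add_ldistrib)

lemma sesq_diff_mat: "sesq (A - B) u v = sesq A u v - sesq B u v"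
  by (simp add: sesq_def matrix_vector_mult_def sum_subtractf algebra_simps)

lemma sesq_Mz: "sesq (Mz A D z) u v = sesq A u v + z * sesq D u v"
  unfolding sesq_def Mz_mult
  by (simp add: distrib_left sum.distrib sum_distrib_left mult.left_commute)

lemma sesq_zero_right: "M *v v = 0 \<Longrightarrow> sesq M u v = 0"
  by (simp add: sesq_def)

lemma det_zero_kernel:
  fixes M :: "complex^'m^'m"
  assumes "det M = 0" shows "\<exists>v. v \<noteq> 0 \<and> M *v v = 0"
proof -
  have "\<not> inj ((*v) M)"
    using det_nz_iff_inj_gen[of "(*v) M"] assms
    by (simp add: matrix_vector_mul_linear_gen matrix_of_matrix_vector_mul)
  then obtain x y where "x \<noteq> y" "M *v x = M *v y" unfolding inj_def by blast
  then show ?thesis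
    by (intro exI[of _ "x - y"]) (simp add: matrix_vector_mult_diff_distrib)
qed

lemma cpos_det_nz: assumes "cpos_def A" shows "det A \<noteq> 0"
proof
  assume "det A = 0"
  then obtain v where v: "v \<noteq> 0" "A *v v = 0" using det_zero_kernel by blast
  then have "sesq A v v = 0" by (simp add: sesq_zero_right)
  with v assms show False unfolding cpos_iff by auto
qed

lemma cpos_id: "cpos_def (mat 1 :: complex^'m^'m)"
  unfolding cpos_iff
proof safe
  show "herm (mat 1 :: complex^'m^'m)" by (simp add: herm_def mat_def)
next
  fix v :: "complex^'m" assume "v \<noteq> 0"
  then obtain k where k: "v $ k \<noteq> 0" by (metis vec_eq_iff zero_index)
  have "sesq (mat 1) v v = (\<Sum>i\<in>UNIV. v$i * cnj (v$i))"
    by (simp add: sesq_def mult.commute)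
  then have "Re (sesq (mat 1) v v) = (\<Sum>i\<in>UNIV. (Re (v$i))\<^sup>2 + (Im (v$i))\<^sup>2)"
    by (simp add: Re_sum complex_mult_cnj)
  also have "\<dots> > 0"
    by (rule sum_pos2[of _ k]) (use k complex_neq_0 in auto)
  finally show "0 < Re (sesq (mat 1) v v)" .
qed

lemma cposD: "cpos_def A \<Longrightarrow> v \<noteq> 0 \<Longrightarrow> sesq A v v = complex_of_real (Re (sesq A v v)) \<and> Re (sesq A v v) > 0"
  unfolding cpos_iff using qf_real complex_eq_iff by (metis Im_complex_of_real Re_complex_of_real)

lemma root_real:
  assumes A: "cpos_def A" and B: "cpos_def B" and z: "det (Mz A (B - A) z) = 0"
  shows "\<exists>s. z = complex_of_real s \<and> (s < 0 \<or> s > 1)"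
proof -
  obtain v where v: "v \<noteq> 0" "Mz A (B - A) z *v v = 0" using det_zero_kernel[OF z] by blast
  define a where "a = Re (sesq A v v)"
  define b where "b = Re (sesq B v v)"
  have ha: "sesq A v v = complex_of_real a" "a > 0" using cposD[OF A v(1)] unfolding a_def by auto
  have hb: "sesq B v v = complex_of_real b" "b > 0" using cposD[OF B v(1)] unfolding b_def by auto
  have eq: "complex_of_real a + z * (complex_of_real b - complex_of_real a) = 0"
    using sesq_zero_right[OF v(2), of v] unfolding sesq_Mz sesq_diff_mat ha hb .
  have ab: "b \<noteq> a" using eq ha by auto
  have zeq: "z = complex_of_real (a / (a - b))"
  proof -
    have "complex_of_real b - complex_of_real a \<noteq> 0" using ab by simp
    then have "z = - complex_of_real a / (complex_of_real b - complex_of_real a)"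
      using eq by (simp add: field_simps)
    also have "\<dots> = complex_of_real a / (complex_of_real a - complex_of_real b)"
      by (simp only: minus_divide_left[symmetric] minus_divide_right minus_diff_eq)
    also have "\<dots> = complex_of_real (a / (a - b))"
      by simp
    finally show ?thesis .
  qed
  moreover have "a / (a - b) < 0 \<or> a / (a - b) > 1"
  proof (cases "a > b")
    case True then show ?thesis using ha hb by (simp add: less_divide_eq)
  next
    case False then have "a < b" using ab by simp
    then show ?thesis using ha hb by (simp add: divide_less_0_iff)
  qed
  ultimately show ?thesis by blast
qed

lemma Mz_0: "Mz A D 0 = A"
  by (simp add: Mz_def vec_eq_iff)

lemma PMat_nz: assumes "cpos_def A" shows "det (PMat A D) \<noteq> 0"
proof
  assume "det (PMat A D) = 0"
  then have "poly (det (PMat A D)) 0 = 0" by simp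
  then show False using cpos_det_nz[OF assms] by (simp add: poly_det_PMat Mz_0)
qed

lemma ln_less_minus_one: "0 < x \<Longrightarrow> x \<noteq> 1 \<Longrightarrow> ln x < x - 1"
  for x :: real
  using ln_le_minus_one ln_eq_minus_one by fastforce

lemma wamgm:
  fixes b t :: real
  assumes b: "b > 0" and t: "0 < t" "t < 1"
  shows "t * ln b \<le> ln ((1 - t) + t * b)" and "b \<noteq> 1 \<Longrightarrow> t * ln b < ln ((1 - t) + t * b)"
proof -
  define m where "m = (1 - t) + t * b"
  have m: "m > 0" unfolding m_def using b t by (smt (verit) mult_pos_pos)
  have e1: "ln (1 / m) \<le> 1 / m - 1" using m by (intro ln_le_minus_one) simp
  have e2: "ln (b / m) \<le> b / m - 1" using m b by (intro ln_le_minus_one) simp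
  have l1: "ln (1 / m) = - ln m" using m by (simp add: ln_div)
  have l2: "ln (b / m) = ln b - ln m" using m b by (simp add: ln_div)
  have sum0: "(1 - t) * (1 / m - 1) + t * (b / m - 1) = 0"
    using m unfolding m_def by (simp add: field_simps)
  have key: "(1 - t) * ln (1 / m) + t * ln (b / m) \<le> (1 - t) * (1 / m - 1) + t * (b / m - 1)"
    using e1 e2 t by (intro add_mono mult_left_mono) auto
  show "t * ln b \<le> ln ((1 - t) + t * b)"
    using key sum0 unfolding l1 l2 m_def[symmetric] by (simp add: algebra_simps)
  assume "b \<noteq> 1"
  have key2: "(1 - t) * ln (1 / m) + t * ln (b / m) < (1 - t) * (1 / m - 1) + t * (b / m - 1)"
  proof (cases "m = 1")
    case True
    then have "ln (b / m) < b / m - 1" using b \<open>b \<noteq> 1\<close> by (simp add: ln_less_minus_one)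
    then show ?thesis using e1 t by (smt (verit) mult_strict_left_mono mult_left_mono)
  next
    case False
    then have "ln (1 / m) < 1 / m - 1" using m by (intro ln_less_minus_one) auto
    then show ?thesis using e2 t by (smt (verit) mult_strict_left_mono mult_left_mono)
  qed
  show "t * ln b < ln ((1 - t) + t * b)"
    using key2 sum0 unfolding l1 l2 m_def[symmetric] by (simp add: algebra_simps)
qed

lemma det_factor:
  assumes A: "cpos_def A" and B: "cpos_def B"
  shows "\<exists>N (r::nat \<Rightarrow> real). (\<forall>i<N. r i < 0 \<or> r i > 1) \<and>
     (\<forall>z. det (Mz A (B - A) z) = det A * (\<Prod>i<N. 1 - z / complex_of_real (r i)))"
proof -
  define q where "q = det (PMat A (B - A))"
  have q0: "q \<noteq> 0" unfolding q_def by (rule PMat_nz[OF A])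
  obtain root where dec: "smult (lead_coeff q) (\<Prod>i<degree q. [:-root i, 1:]) = q"
    using complex_poly_decompose' by blast
  define N where "N = degree q"
  define c where "c = lead_coeff q"
  have pq: "det (Mz A (B - A) z) = c * (\<Prod>i<N. z - root i)" for z
  proof -
    have "det (Mz A (B - A) z) = poly q z" unfolding q_def poly_det_PMat ..
    also have "\<dots> = poly (smult (lead_coeff q) (\<Prod>i<degree q. [:-root i, 1:])) z" using dec by simp
    also have "\<dots> = c * (\<Prod>i<N. z - root i)" by (simp add: poly_prod c_def N_def)
    finally show ?thesis .
  qed
  have "\<forall>i\<in>{..<N}. \<exists>s. root i = complex_of_real s \<and> (s < 0 \<or> s > 1)"
  proof
    fix i assume i: "i \<in> {..<N}"
    have "det (Mz A (B - A) (root i)) = 0"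
      unfolding pq using i by (auto intro: prod_zero)
    then show "\<exists>s. root i = complex_of_real s \<and> (s < 0 \<or> s > 1)"
      by (rule root_real[OF A B])
  qed
  then obtain r where r: "\<forall>i\<in>{..<N}. root i = complex_of_real (r i) \<and> (r i < 0 \<or> r i > 1)"
    by (metis bchoice)
  have rnz: "complex_of_real (r i) \<noteq> 0" if "i < N" for i using bspec[OF r, of i] that by auto
  have dA: "det A = c * (\<Prod>i<N. - complex_of_real (r i))"
    using pq[of 0] r by (simp add: Mz_0)
  have "det (Mz A (B - A) z) = det A * (\<Prod>i<N. 1 - z / complex_of_real (r i))" for z
  proof -
    have "det (Mz A (B - A) z) = c * (\<Prod>i<N. (- complex_of_real (r i)) * (1 - z / complex_of_real (r i)))"
      unfolding pq
      by (intro arg_cong2[where f="(*)"] refl prod.cong) (use r rnz in \<open>auto simp: field_simps\<close>)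
    also have "\<dots> = det A * (\<Prod>i<N. 1 - z / complex_of_real (r i))"
      unfolding dA prod.distrib by (simp add: mult.assoc)
    finally show ?thesis .
  qed
  then show ?thesis using r by blast
qed

lemma sesq_smult_right: "sesq M u (c *s v) = c * sesq M u v"
  by (simp add: sesq_def matrix_vector_mult_def sum_distrib_left mult.left_commute)

lemma sesq_smult_left: "sesq M (c *s u) v = cnj c * sesq M u v"
  by (simp add: sesq_def sum_distrib_left mult.assoc)

lemma sesq_add_right: "sesq M u (v + w) = sesq M u v + sesq M u w"
  by (simp add: sesq_def matrix_vector_right_distrib distrib_left sum.distrib)

lemma sesq_add_left: "sesq M (u + v) w = sesq M u w + sesq M v w"
  by (simp add: sesq_def distrib_right sum.distrib)

lemma sesq_axis: "sesq M (axis j 1) (axis k 1) = M $ j $ k"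
proof -
  have e1: "cnj (axis j 1 $ i) * x = (if i = j then x else 0)" for i and x :: complex
    by (simp add: axis_def)
  have e2: "M $ j $ l * (axis k 1 $ l) = (if l = k then M $ j $ l else 0)" for l
    by (simp add: axis_def)
  show ?thesis
    unfolding sesq_def e1 by (simp add: matrix_vector_mult_def e2)
qed

lemma herm_uminus: "herm D \<Longrightarrow> herm (- D)"
  unfolding herm_def vector_uminus_component by (metis complex_cnj_minus)

lemma herm_diff: "herm A \<Longrightarrow> herm B \<Longrightarrow> herm (B - A)"
  unfolding herm_def vector_minus_component by (metis complex_cnj_diff)

lemma sesq_uminus_mat: "sesq (- D) u v = - sesq D u v"
  by (simp add: sesq_def matrix_vector_mult_def sum_negf)

lemma polarization:
  assumes h: "herm D" and nz: "D \<noteq> 0"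
  shows "\<exists>v. Re (sesq D v v) \<noteq> 0"
proof (rule ccontr)
  assume "\<not> ?thesis"
  then have z: "sesq D v v = 0" for v using qf_real[OF h, of v] complex_eq_iff by auto
  have zz: "sesq D u w = 0" for u w
  proof -
    define X where "X = sesq D u w"
    define Y where "Y = sesq D w u"
    have "sesq D (u + w) (u + w) = 0" by (rule z)
    then have e1: "X + Y = 0"
      unfolding sesq_add_left sesq_add_right z X_def Y_def by (simp add: ac_simps)
    have "sesq D (u + \<i> *s w) (u + \<i> *s w) = 0" by (rule z)
    then have e2: "\<i> * X - \<i> * Y = 0"
      unfolding sesq_add_left sesq_add_right sesq_smult_left sesq_smult_right z X_def Y_def
      by (simp add: algebra_simps)
    have "\<i> * (X - Y) = 0" using e2 by (simp add: right_diff_distrib)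
    then have "X = Y" by simp
    with e1 show ?thesis unfolding X_def[symmetric] by simp
  qed
  have "D = 0"
    unfolding vec_eq_iff using zz sesq_axis by (metis zero_index)
  with nz show False by simp
qed

lemma continuous_on_vec_nth' [continuous_intros]:
  "continuous_on S (\<lambda>v::'a::real_normed_vector^'m. v $ i)"
  by (rule linear_continuous_on[OF bounded_linear_vec_nth])

lemma continuous_on_qf: "continuous_on S (\<lambda>v. sesq M v v)"
  unfolding sesq_expand by (intro continuous_intros)

lemma sesq_scaleR: "sesq M (c *\<^sub>R u) (c *\<^sub>R u) = complex_of_real (c\<^sup>2) * sesq M u u"
proof -
  have "c *\<^sub>R u = complex_of_real c *s u"
    unfolding vec_eq_iff vector_scaleR_component by (simp add: scaleR_conv_of_real)
  then show ?thesis
    by (simp add: sesq_smult_left sesq_smult_right power2_eq_square)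
qed

lemma sesq_zero_left: "sesq M 0 v = 0"
  by (simp add: sesq_def)

lemma kernel_det: fixes M :: "complex^'m^'m"
  assumes "M *v w = 0" "w \<noteq> 0" shows "det M = 0"
proof (rule ccontr)
  assume "det M \<noteq> 0"
  then have "inj ((*v) M)"
    using det_nz_iff_inj_gen[of "(*v) M"]
    by (simp add: matrix_vector_mul_linear_gen matrix_of_matrix_vector_mul)
  then have "w = 0" using assms(1) by (metis inj_eq matrix_vector_mult_0_right)
  with assms(2) show False by simp
qed

lemma quad_nonpos:
  fixes s b :: real
  assumes "\<And>e. 2 * e * s + e\<^sup>2 * b \<le> 0"
  shows "s = 0"
proof (rule ccontr)
  assume s: "s \<noteq> 0"
  define c where "c = \<bar>b\<bar> + 1"
  define e where "e = s / c"
  have d: "c > 0" "2 * c + b > 0" unfolding c_def by auto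
  have "2 * e * s + e\<^sup>2 * b = s\<^sup>2 * (2 * c + b) / c\<^sup>2"
    unfolding e_def using d by (simp add: field_simps power2_eq_square)
  moreover have "s\<^sup>2 * (2 * c + b) / c\<^sup>2 > 0"
    using s d by (intro divide_pos_pos mult_pos_pos) auto
  ultimately show False using assms[of e] by linarith
qed

lemma Re_sesq_scaleR: "Re (sesq M (c *\<^sub>R u) (c *\<^sub>R u)) = c\<^sup>2 * Re (sesq M u u)"
  by (simp add: sesq_scaleR)

lemma rayleigh:
  fixes K A :: "complex^'m^'m"
  assumes K: "herm K" and A: "cpos_def A" and pos: "Re (sesq K v0 v0) > 0"
  shows "\<exists>\<mu>>0. \<exists>w. w \<noteq> 0 \<and> K *v w = complex_of_real \<mu> *s (A *v w)"
proof -
  have Apos: "Re (sesq A u u) > 0" if "u \<noteq> 0" for u using A that unfolding cpos_iff by auto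
  have hA: "herm A" using A unfolding cpos_iff by auto
  have v0: "v0 \<noteq> 0" using pos by (auto simp: sesq_zero_left)
  define f where "f v = Re (sesq K v v) / Re (sesq A v v)" for v
  define S where "S = sphere (0::complex^'m) 1"
  have fscale: "f (c *\<^sub>R u) = f u" if "c \<noteq> 0" for c u
    unfolding f_def Re_sesq_scaleR using that by simp
  have inS: "(1 / norm u) *\<^sub>R u \<in> S" if "u \<noteq> 0" for u
    using that unfolding S_def by simp
  have cS: "compact S" unfolding S_def by simp
  have neS: "S \<noteq> {}" using inS[OF v0] by blast
  have Snz: "u \<noteq> 0" if "u \<in> S" for u using that unfolding S_def by auto
  have contf: "continuous_on S f"
    unfolding f_def
    by (intro continuous_intros continuous_on_qf) (use Apos Snz in fastforce)
  obtain w where w: "w \<in> S" "\<And>y. y \<in> S \<Longrightarrow> f y \<le> f w"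
    using continuous_attains_sup[OF cS neS contf] by blast
  define \<mu> where "\<mu> = f w"
  have wnz: "w \<noteq> 0" using Snz[OF w(1)] .
  have fle: "f u \<le> \<mu>" if "u \<noteq> 0" for u
  proof -
    have "f u = f ((1 / norm u) *\<^sub>R u)" using that by (simp add: fscale)
    also have "\<dots> \<le> \<mu>" unfolding \<mu>_def by (rule w(2)[OF inS[OF that]])
    finally show ?thesis .
  qed
  have le: "Re (sesq K u u) \<le> \<mu> * Re (sesq A u u)" for u
  proof (cases "u = 0")
    case True then show ?thesis by (simp add: sesq_zero_left)
  next
    case False
    then have "Re (sesq K u u) / Re (sesq A u u) \<le> \<mu>" using fle unfolding f_def by blast
    then show ?thesis using Apos[OF False] by (simp add: divide_le_eq)
  qed
  have mupos: "\<mu> > 0"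
  proof -
    have "f v0 > 0" unfolding f_def using pos Apos[OF v0] by simp
    then show ?thesis using fle[OF v0] by simp
  qed
  have eqw: "Re (sesq K w w) = \<mu> * Re (sesq A w w)"
    unfolding \<mu>_def f_def using Apos[OF wnz] by simp
  define L where "L = Mz K A (complex_of_real (- \<mu>))"
  have sL: "sesq L u v = sesq K u v - complex_of_real \<mu> * sesq A u v" for u v
    unfolding L_def sesq_Mz by simp
  have hK': "cnj (K $ j $ i) = K $ i $ j" for i j using K unfolding herm_def by (metis complex_cnj_cnj)
  have hA': "cnj (A $ j $ i) = A $ i $ j" for i j using hA unfolding herm_def by (metis complex_cnj_cnj)
  have hL: "herm L"
    unfolding herm_def L_def Mz_def by (simp add: hK' hA')
  have Lle: "Re (sesq L u u) \<le> 0" for u using le[of u] unfolding sL by simp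
  have Lw: "Re (sesq L w w) = 0" using eqw unfolding sL by simp
  define y where "y = L *v w"
  define s where "s = Re (sesq L y w)"
  define b where "b = Re (sesq L y y)"
  have s_eq: "s = (\<Sum>i\<in>UNIV. (Re (y$i))\<^sup>2 + (Im (y$i))\<^sup>2)"
  proof -
    have "sesq L y w = (\<Sum>i\<in>UNIV. y$i * cnj (y$i))"
      unfolding sesq_def y_def[symmetric] by (simp add: mult.commute)
    then show ?thesis unfolding s_def by (simp add: Re_sum complex_mult_cnj)
  qed
  have s2: "Re (sesq L w y) = s"
    unfolding s_def sesq_herm[OF hL, of w y] by simp
  have quad: "2 * e * s + e\<^sup>2 * b \<le> 0" for e
  proof -
    have "sesq L (w + complex_of_real e *s y) (w + complex_of_real e *s y)
      = sesq L w w + complex_of_real e * sesq L w y + complex_of_real e * sesq L y w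
        + complex_of_real e * complex_of_real e * sesq L y y"
      unfolding sesq_add_left sesq_add_right sesq_smult_left sesq_smult_right
      by (simp add: algebra_simps)
    then have "Re (sesq L (w + complex_of_real e *s y) (w + complex_of_real e *s y))
      = 2 * e * s + e\<^sup>2 * b"
      using Lw s2 unfolding s_def b_def by (simp add: power2_eq_square)
    then show ?thesis using Lle by metis
  qed
  have "s = 0" by (rule quad_nonpos[OF quad])
  then have "\<forall>i\<in>UNIV. (Re (y$i))\<^sup>2 + (Im (y$i))\<^sup>2 = 0"
    unfolding s_eq by (subst (asm) sum_nonneg_eq_0_iff) auto
  then have "y = 0" unfolding vec_eq_iff by (simp add: complex_eq_iff)
  then have "K *v w + complex_of_real (- \<mu>) *s (A *v w) = 0"
    unfolding y_def L_def Mz_mult .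
  then have "K *v w = complex_of_real \<mu> *s (A *v w)"
    unfolding vec_eq_iff by (simp add: algebra_simps)
  then show ?thesis using mupos wnz by blast
qed

lemma exists_root:
  assumes A: "cpos_def A" and B: "cpos_def B" and AB: "A \<noteq> B"
  shows "\<exists>z. det (Mz A (B - A) z) = 0"
proof -
  define D where "D = B - A"
  have hA: "herm A" and hB: "herm B" using A B unfolding cpos_iff by auto
  have hD: "herm D" unfolding D_def by (rule herm_diff[OF hA hB])
  have Dnz: "D \<noteq> 0" using AB unfolding D_def by simp
  obtain v where v: "Re (sesq D v v) \<noteq> 0" using polarization[OF hD Dnz] by blast
  show ?thesis
  proof (cases "Re (sesq D v v) > 0")
    case True
    obtain \<mu> w where mw: "\<mu> > 0" "w \<noteq> 0" "D *v w = complex_of_real \<mu> *s (A *v w)"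
      using rayleigh[OF hD A True] by blast
    have "Mz A D (complex_of_real (- 1 / \<mu>)) *v w = 0"
      unfolding Mz_mult mw(3) vec_eq_iff using mw(1) by simp
    then show ?thesis using kernel_det mw(2) unfolding D_def by blast
  next
    case False
    then have "Re (sesq (- D) v v) > 0" using v by (simp add: sesq_uminus_mat)
    then obtain \<mu> w where mw: "\<mu> > 0" "w \<noteq> 0" "- D *v w = complex_of_real \<mu> *s (A *v w)"
      using rayleigh[OF herm_uminus[OF hD] A] by blast
    have Dw: "D *v w = complex_of_real (- \<mu>) *s (A *v w)"
      using mw(3) unfolding vec_eq_iff by (simp add: matrix_vector_mult_def sum_negf) (metis minus_equation_iff)
    have "Mz A D (complex_of_real (1 / \<mu>)) *v w = 0"
      unfolding Mz_mult Dw vec_eq_iff using mw(1) by simp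
    then show ?thesis using kernel_det mw(2) unfolding D_def by blast
  qed
qed

lemma Mz_one_id: "Mz (mat 1) (B - mat 1) 1 = B"
  by (simp add: Mz_def vec_eq_iff mat_def)

lemma Mz_one: "Mz A (B - A) 1 = B"
  by (simp add: Mz_def vec_eq_iff)

lemma cpos_det_pos: fixes B :: "complex^'a^'a" assumes B: "cpos_def B" shows "\<exists>d>0. det B = complex_of_real d"
proof -
  obtain N :: nat and r :: "nat \<Rightarrow> real" where r: "\<forall>i<N. r i < 0 \<or> r i > 1"
    and eq: "\<forall>z. det (Mz (mat 1) (B - mat 1) z) = det (mat 1 :: complex^'a^'a) * (\<Prod>i<N. 1 - z / complex_of_real (r i))"
    using det_factor[OF cpos_id B] by blast
  have "det B = (\<Prod>i<N. 1 - 1 / complex_of_real (r i))"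
    using eq[rule_format, of 1] unfolding Mz_one_id by simp
  also have "\<dots> = complex_of_real (\<Prod>i<N. 1 - 1 / r i)" by simp
  finally have "det B = complex_of_real (\<Prod>i<N. 1 - 1 / r i)" .
  moreover have "(\<Prod>i<N. 1 - 1 / r i) > 0"
  proof (rule prod_pos)
    fix i assume "i \<in> {..<N}"
    then have "r i < 0 \<or> r i > 1" using r by auto
    then show "1 - 1 / r i > 0"
      by (auto simp: divide_less_0_iff)
  qed
  ultimately show ?thesis by blast
qed

lemma det_Re: assumes "cpos_def B" shows "det B = complex_of_real (Re (det B))" "Re (det B) > 0"
  using cpos_det_pos[OF assms] by auto

lemma logdet_concave:
  assumes A: "cpos_def A" and B: "cpos_def B" and t: "0 < t" "t < 1"
  shows "(1 - t) * ln (Re (det A)) + t * ln (Re (det B)) \<le> ln (Re (det (Mz A (B - A) (complex_of_real t))))"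
    and "A \<noteq> B \<Longrightarrow> (1 - t) * ln (Re (det A)) + t * ln (Re (det B)) < ln (Re (det (Mz A (B - A) (complex_of_real t))))"
proof -
  obtain N :: nat and r :: "nat \<Rightarrow> real" where r: "\<forall>i<N. r i < 0 \<or> r i > 1"
    and eq: "\<forall>z. det (Mz A (B - A) z) = det A * (\<Prod>i<N. 1 - z / complex_of_real (r i))"
    using det_factor[OF A B] by blast
  obtain a where a: "a > 0" "det A = complex_of_real a" using cpos_det_pos[OF A] by blast
  define bb where "bb i = 1 - 1 / r i" for i
  define aa where "aa i = 1 - t / r i" for i
  have rnz: "r i \<noteq> 0" if "i < N" for i using r that by force
  have bpos: "bb i > 0" if "i < N" for i
    using r that unfolding bb_def by (auto simp: divide_less_0_iff)
  have bne: "bb i \<noteq> 1" if "i < N" for i using rnz[OF that] unfolding bb_def by simp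
  have aeq: "aa i = (1 - t) + t * bb i" for i unfolding aa_def bb_def by (simp add: field_simps)
  have apos: "aa i > 0" if "i < N" for i unfolding aeq using bpos[OF that] t
    by (smt (verit) mult_pos_pos)
  have detM: "Re (det (Mz A (B - A) (complex_of_real t))) = a * (\<Prod>i<N. aa i)"
  proof -
    have "det (Mz A (B - A) (complex_of_real t)) = complex_of_real (a * (\<Prod>i<N. aa i))"
      using eq[rule_format, of "complex_of_real t"] unfolding a(2) aa_def by simp
    then show ?thesis by (simp only: Re_complex_of_real)
  qed
  have detB: "Re (det B) = a * (\<Prod>i<N. bb i)"
  proof -
    have "det B = complex_of_real (a * (\<Prod>i<N. bb i))"
      using eq[rule_format, of 1] unfolding a(2) bb_def Mz_one by simp
    then show ?thesis by (simp only: Re_complex_of_real)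
  qed
  have lnM: "ln (Re (det (Mz A (B - A) (complex_of_real t)))) = ln a + (\<Sum>i<N. ln (aa i))"
  proof -
    have pp: "prod aa {..<N} > 0" by (rule prod_pos) (use apos in auto)
    have lp: "ln (prod aa {..<N}) = (\<Sum>i<N. ln (aa i))"
      by (rule ln_prod) (use apos in force)+
    show ?thesis by (simp only: detM ln_mult_pos[OF a(1) pp] lp)
  qed
  have lnB: "ln (Re (det B)) = ln a + (\<Sum>i<N. ln (bb i))"
  proof -
    have pp: "prod bb {..<N} > 0" by (rule prod_pos) (use bpos in auto)
    have lp: "ln (prod bb {..<N}) = (\<Sum>i<N. ln (bb i))"
      by (rule ln_prod) (use bpos in force)+
    show ?thesis by (simp only: detB ln_mult_pos[OF a(1) pp] lp)
  qed
  have lnA: "ln (Re (det A)) = ln a" using a by simp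
  have each: "t * ln (bb i) \<le> ln (aa i)" if "i < N" for i
    unfolding aeq using wamgm(1)[OF bpos[OF that] t] .
  have each2: "t * ln (bb i) < ln (aa i)" if "i < N" for i
    unfolding aeq using wamgm(2)[OF bpos[OF that] t bne[OF that]] .
  have lhs: "(1 - t) * ln (Re (det A)) + t * ln (Re (det B)) = ln a + (\<Sum>i<N. t * ln (bb i))"
    unfolding lnA lnB by (simp add: algebra_simps sum_distrib_left)
  show "(1 - t) * ln (Re (det A)) + t * ln (Re (det B)) \<le> ln (Re (det (Mz A (B - A) (complex_of_real t))))"
    unfolding lhs lnM using each by (intro add_left_mono sum_mono) auto
  assume AB: "A \<noteq> B"
  have N: "N \<noteq> 0"
  proof
    assume "N = 0"
    obtain z where "det (Mz A (B - A) z) = 0" using exists_root[OF A B AB] by blast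
    then show False using eq \<open>N = 0\<close> cpos_det_nz[OF A] by simp
  qed
  have "(\<Sum>i<N. t * ln (bb i)) < (\<Sum>i<N. ln (aa i))"
    using each2 N by (intro sum_strict_mono) auto
  then show "(1 - t) * ln (Re (det A)) + t * ln (Re (det B)) < ln (Re (det (Mz A (B - A) (complex_of_real t))))"
    unfolding lhs lnM by simp
qed

lemma Mz_comb: "Mz A (B - A) (complex_of_real t) = (1 - t) *\<^sub>R A + t *\<^sub>R B"
  unfolding vec_eq_iff Mz_def vector_add_component vector_scaleR_component vec_lambda_beta vector_minus_component
  by (simp add: scaleR_conv_of_real algebra_simps)

lemma herm_Mz_real: "herm A \<Longrightarrow> herm D \<Longrightarrow> herm (Mz A D (complex_of_real t))"
proof -
  assume hA: "herm A" and hD: "herm D"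
  have hA': "cnj (A $ j $ i) = A $ i $ j" for i j using hA unfolding herm_def by (metis complex_cnj_cnj)
  have hD': "cnj (D $ j $ i) = D $ i $ j" for i j using hD unfolding herm_def by (metis complex_cnj_cnj)
  show ?thesis unfolding herm_def Mz_def by (simp add: hA' hD')
qed

lemma cpos_Mz:
  assumes A: "cpos_def A" and B: "cpos_def B" and t: "0 \<le> t" "t \<le> 1"
  shows "cpos_def (Mz A (B - A) (complex_of_real t))"
  unfolding cpos_iff
proof safe
  have hA: "herm A" and hB: "herm B" using A B unfolding cpos_iff by auto
  show "herm (Mz A (B - A) (complex_of_real t))"
    by (rule herm_Mz_real[OF hA herm_diff[OF hA hB]])
  fix v :: "complex^'a" assume v: "v \<noteq> 0"
  have a: "Re (sesq A v v) > 0" and b: "Re (sesq B v v) > 0" using A B v unfolding cpos_iff by auto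
  have "Re (sesq (Mz A (B - A) (complex_of_real t)) v v) = (1 - t) * Re (sesq A v v) + t * Re (sesq B v v)"
    unfolding sesq_Mz sesq_diff_mat by (simp add: algebra_simps)
  also have "\<dots> > 0" using a b t
    by (cases "t = 0") (auto intro: add_nonneg_pos add_pos_nonneg mult_pos_pos)
  finally show "0 < Re (sesq (Mz A (B - A) (complex_of_real t)) v v)" .
qed

lemma cpos_comb:
  assumes "cpos_def A" "cpos_def B" "0 \<le> t" "t \<le> 1"
  shows "cpos_def ((1 - t) *\<^sub>R A + t *\<^sub>R B)"
  using cpos_Mz[OF assms] unfolding Mz_comb .

lemma scaleR_as_Mz: "c *\<^sub>R M = Mz 0 M (complex_of_real c)"
  unfolding vec_eq_iff Mz_def vector_scaleR_component vec_lambda_beta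
  by (simp add: scaleR_conv_of_real)

lemma cpos_scaleR:
  assumes M: "cpos_def M" and c: "c > 0"
  shows "cpos_def (c *\<^sub>R M)"
  unfolding cpos_iff scaleR_as_Mz
proof safe
  have hM: "herm M" using M unfolding cpos_iff by auto
  show "herm (Mz 0 M (complex_of_real c))"
    by (rule herm_Mz_real[OF _ hM]) (simp add: herm_def)
  fix v :: "complex^'a" assume v: "v \<noteq> 0"
  have "Re (sesq M v v) > 0" using M v unfolding cpos_iff by auto
  moreover have "sesq (0::complex^'a^'a) v v = 0" by (simp add: sesq_def)
  ultimately show "0 < Re (sesq (Mz 0 M (complex_of_real c)) v v)"
    unfolding sesq_Mz using c by simp
qed

lemma det_scaleR: "det (c *\<^sub>R (M :: complex^'a^'a)) = complex_of_real c ^ CARD('a) * det M"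
proof -
  have "c *\<^sub>R M = (\<chi> i. complex_of_real c *s M $ i)"
    unfolding vec_eq_iff vector_scaleR_component vec_lambda_beta vector_scalar_mult_def
    by (simp add: scaleR_conv_of_real)
  then show ?thesis using det_rows_mul[of "\<lambda>i. complex_of_real c" "\<lambda>i. M $ i"] by simp
qed

lemma Re_det_scaleR: "Re (det (c *\<^sub>R (M :: complex^'a^'a))) = c ^ CARD('a) * Re (det M)"
  unfolding det_scaleR by (simp flip: of_real_power)

lemma ln_det_matrix_inv:
  fixes Q :: "complex^'a^'a"
  assumes Q: "cpos_def Q" and P: "P > 0"
  shows "ln (Re (det (P *\<^sub>R matrix_inv Q))) = real CARD('a) * ln P - ln (Re (det Q))"
proof -
  have inv: "invertible Q" using cpos_det_nz[OF Q] invertible_det_nz by blast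
  then have "Q ** matrix_inv Q = mat 1"
    unfolding invertible_def matrix_inv_def by (rule someI2_ex) auto
  then have "det Q * det (matrix_inv Q) = 1" by (metis det_I det_mul)
  moreover obtain d where d: "d > 0" "det Q = complex_of_real d" using cpos_det_pos[OF Q] by blast
  ultimately have "det (matrix_inv Q) = complex_of_real (1 / d)"
    by (simp add: field_simps)
  then have "Re (det (P *\<^sub>R matrix_inv Q)) = P ^ CARD('a) * (1 / d)"
    unfolding Re_det_scaleR by simp
  then show ?thesis using d P by (simp add: ln_div ln_realpow)
qed

definition Gf :: "real \<Rightarrow> real \<Rightarrow> complex^'a^'a \<Rightarrow> real" where
  "Gf lam P Q = P * (real CARD('a) * ln P - ln (Re (det Q))) - real CARD('a) * P + lam / P"

lemma inv_convex:
  fixes a b t lam :: real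
  assumes a: "a > 0" and b: "b > 0" and t: "0 < t" "t < 1" and lam: "lam \<ge> 0"
  shows "lam / ((1 - t) * a + t * b) \<le> (1 - t) * (lam / a) + t * (lam / b)"
    and "lam > 0 \<Longrightarrow> a \<noteq> b \<Longrightarrow> lam / ((1 - t) * a + t * b) < (1 - t) * (lam / a) + t * (lam / b)"
proof -
  define P where "P = (1 - t) * a + t * b"
  have P: "P > 0" unfolding P_def using a b t by (smt (verit) mult_pos_pos)
  have id: "(1 - t) * (lam / a) + t * (lam / b) - lam / P = lam * t * (1 - t) * (a - b)\<^sup>2 / (a * b * P)"
    unfolding P_def using a b P unfolding P_def by (simp add: field_simps power2_eq_square)
  have nn: "lam * t * (1 - t) * (a - b)\<^sup>2 / (a * b * P) \<ge> 0"
    using lam t a b P by (intro divide_nonneg_pos mult_nonneg_nonneg) auto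
  show "lam / ((1 - t) * a + t * b) \<le> (1 - t) * (lam / a) + t * (lam / b)"
    using id nn unfolding P_def by linarith
  assume "lam > 0" "a \<noteq> b"
  then have pp: "lam * t * (1 - t) * (a - b)\<^sup>2 / (a * b * P) > 0"
    using t a b P by (intro divide_pos_pos mult_pos_pos) auto
  show "lam / ((1 - t) * a + t * b) < (1 - t) * (lam / a) + t * (lam / b)"
    using id pp unfolding P_def by linarith
qed

lemma ln_Re_det_scaleR:
  fixes M :: "complex^'a^'a"
  assumes "cpos_def M" "c > 0"
  shows "ln (Re (det (c *\<^sub>R M))) = real CARD('a) * ln c + ln (Re (det M))"
proof -
  have "Re (det M) > 0" using det_Re[OF assms(1)] by simp
  then show ?thesis unfolding Re_det_scaleR using assms(2)
    by (simp add: ln_mult_pos ln_realpow)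
qed

lemma pointwise:
  fixes Q1 Q2 :: "complex^'a^'a"
  assumes P1: "P1 > 0" and P2: "P2 > 0" and Q1: "cpos_def Q1" and Q2: "cpos_def Q2"
    and t: "0 < t" "t < 1" and lam: "lam > 0"
  shows "Gf lam ((1 - t) * P1 + t * P2) ((1 - t) *\<^sub>R Q1 + t *\<^sub>R Q2) \<le> (1 - t) * Gf lam P1 Q1 + t * Gf lam P2 Q2"
    and "P1 \<noteq> P2 \<or> Q1 \<noteq> Q2 \<Longrightarrow>
      Gf lam ((1 - t) * P1 + t * P2) ((1 - t) *\<^sub>R Q1 + t *\<^sub>R Q2) < (1 - t) * Gf lam P1 Q1 + t * Gf lam P2 Q2"
proof -
  define m where "m = real CARD('a)"
  define P where "P = (1 - t) * P1 + t * P2"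
  define Q where "Q = (1 - t) *\<^sub>R Q1 + t *\<^sub>R Q2"
  have P: "P > 0" unfolding P_def using P1 P2 t by (smt (verit) mult_pos_pos)
  define s where "s = t * P2 / P"
  have s: "0 < s" "s < 1" unfolding s_def using P P1 P2 t
    by (auto simp: field_simps P_def intro!: mult_pos_pos)
  have ps1: "P * (1 - s) = (1 - t) * P1" unfolding s_def using P by (simp add: field_simps P_def)
  have ps2: "P * s = t * P2" unfolding s_def using P by simp
  define A where "A = (1 / P1) *\<^sub>R Q1"
  define B where "B = (1 / P2) *\<^sub>R Q2"
  have A: "cpos_def A" unfolding A_def using cpos_scaleR[OF Q1] P1 by simp
  have B: "cpos_def B" unfolding B_def using cpos_scaleR[OF Q2] P2 by simp
  have Qpos: "cpos_def Q" unfolding Q_def using cpos_comb[OF Q1 Q2] t by simp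
  have comb: "Mz A (B - A) (complex_of_real s) = (1 / P) *\<^sub>R Q"
  proof -
    have c1: "(1 - s) / P1 = (1 - t) / P" using ps1 P P1 by (simp add: field_simps)
    have c2: "s / P2 = t / P" using ps2 P P2 by (simp add: field_simps)
    have "Mz A (B - A) (complex_of_real s) = ((1 - s) / P1) *\<^sub>R Q1 + (s / P2) *\<^sub>R Q2"
      unfolding Mz_comb A_def B_def by simp
    also have "\<dots> = (1 / P) *\<^sub>R Q"
      unfolding c1 c2 Q_def by (simp add: scaleR_add_right)
    finally show ?thesis .
  qed
  define X where "X = ln (Re (det Q)) - m * ln P"
  define X1 where "X1 = ln (Re (det Q1)) - m * ln P1"
  define X2 where "X2 = ln (Re (det Q2)) - m * ln P2"
  have lA: "ln (Re (det A)) = X1" unfolding A_def X1_def m_def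
    using ln_Re_det_scaleR[OF Q1, of "1 / P1"] P1 by (simp add: ln_div)
  have lB: "ln (Re (det B)) = X2" unfolding B_def X2_def m_def
    using ln_Re_det_scaleR[OF Q2, of "1 / P2"] P2 by (simp add: ln_div)
  have lM: "ln (Re (det (Mz A (B - A) (complex_of_real s)))) = X" unfolding comb X_def m_def
    using ln_Re_det_scaleR[OF Qpos, of "1 / P"] P by (simp add: ln_div)
  have L1: "(1 - s) * X1 + s * X2 \<le> X" using logdet_concave(1)[OF A B s] unfolding lA lB lM .
  have h1: "(1 - t) * P1 * X1 + t * P2 * X2 \<le> P * X"
  proof -
    have "P * ((1 - s) * X1 + s * X2) \<le> P * X" using L1 P by (simp add: mult_left_mono)
    moreover have "P * ((1 - s) * X1 + s * X2) = (1 - t) * P1 * X1 + t * P2 * X2"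
    proof -
      have "P * ((1 - s) * X1 + s * X2) = (P * (1 - s)) * X1 + (P * s) * X2"
        by (simp only: distrib_left mult.assoc)
      also have "\<dots> = (1 - t) * P1 * X1 + t * P2 * X2" unfolding ps1 ps2 ..
      finally show ?thesis .
    qed
    ultimately show ?thesis by simp
  qed
  have id: "(1 - t) * Gf lam P1 Q1 + t * Gf lam P2 Q2 - Gf lam P Q
      = (P * X - ((1 - t) * P1 * X1 + t * P2 * X2)) + ((1 - t) * (lam / P1) + t * (lam / P2) - lam / P)"
    unfolding Gf_def X_def X1_def X2_def m_def[symmetric] P_def by (simp add: algebra_simps)
  have h2: "lam / P \<le> (1 - t) * (lam / P1) + t * (lam / P2)"
    unfolding P_def using inv_convex(1)[OF P1 P2 t] lam by simp
  show "Gf lam ((1 - t) * P1 + t * P2) ((1 - t) *\<^sub>R Q1 + t *\<^sub>R Q2) \<le> (1 - t) * Gf lam P1 Q1 + t * Gf lam P2 Q2"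
    using id h1 h2 unfolding P_def[symmetric] Q_def[symmetric] by linarith
  assume strict: "P1 \<noteq> P2 \<or> Q1 \<noteq> Q2"
  show "Gf lam ((1 - t) * P1 + t * P2) ((1 - t) *\<^sub>R Q1 + t *\<^sub>R Q2) < (1 - t) * Gf lam P1 Q1 + t * Gf lam P2 Q2"
  proof (cases "P1 = P2")
    case False
    have "lam / P < (1 - t) * (lam / P1) + t * (lam / P2)"
      unfolding P_def using inv_convex(2)[OF P1 P2 t _ lam False] lam by simp
    then show ?thesis using id h1 unfolding P_def[symmetric] Q_def[symmetric] by linarith
  next
    case True
    then have "Q1 \<noteq> Q2" using strict by simp
    then have AB: "A \<noteq> B" unfolding A_def B_def True using P2 by simp
    have L2: "(1 - s) * X1 + s * X2 < X" using logdet_concave(2)[OF A B s AB] unfolding lA lB lM .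
    have "(1 - t) * P1 * X1 + t * P2 * X2 < P * X"
    proof -
      have "P * ((1 - s) * X1 + s * X2) < P * X" using L2 P by simp
    moreover have "P * ((1 - s) * X1 + s * X2) = (1 - t) * P1 * X1 + t * P2 * X2"
      proof -
        have "P * ((1 - s) * X1 + s * X2) = (P * (1 - s)) * X1 + (P * s) * X2"
          by (simp only: distrib_left mult.assoc)
        also have "\<dots> = (1 - t) * P1 * X1 + t * P2 * X2" unfolding ps1 ps2 ..
        finally show ?thesis .
      qed
      ultimately show ?thesis by simp
    qed
    then show ?thesis using id h2 unfolding P_def[symmetric] Q_def[symmetric] by linarith
  qed
qed

definition ee :: "int \<Rightarrow> real \<Rightarrow> complex" where
  "ee l t = exp ((\<i> * of_int l) * complex_of_real t)"

lemma ee_mult: "ee a t * ee b t = ee (a + b) t"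
  unfolding ee_def mult_exp_exp by (simp add: algebra_simps)

lemma ee_0: "ee 0 t = 1" by (simp add: ee_def)

lemma cont_ee: "continuous_on S (ee l)"
  unfolding ee_def by (intro continuous_intros)

lemma int_ee: "integral {0..2*pi} (ee l) = (if l = 0 then 2 * pi else 0)"
proof (cases "l = 0")
  case True
  then show ?thesis by (simp add: ee_0 [abs_def] scaleR_conv_of_real)
next
  case False
  then have a: "\<i> * of_int l \<noteq> (0::complex)" by simp
  have "integral {0..2*pi} (ee l) = (exp ((\<i> * of_int l) * of_real (2*pi)) - 1) / (\<i> * of_int l)"
    unfolding ee_def [abs_def] by (rule integral_exp) (use a in auto)
  also have "exp ((\<i> * of_int l) * of_real (2*pi)) = exp (\<i> * (of_int l * (of_real pi * 2)))"
    by (simp add: ac_simps)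
  also have "\<dots> = 1" by (rule exp_2pi_1_int)
  finally show ?thesis using False by simp
qed

lemma has_int_ee: "(ee l has_integral (if l = 0 then 2 * pi else 0)) {0..2*pi}"
proof -
  have "ee l integrable_on {0..2*pi}" by (rule integrable_continuous_interval[OF cont_ee])
  then show ?thesis using int_ee[of l] by (metis integrable_integral)
qed

definition II :: "int \<Rightarrow> complex" where "II l = (if l = 0 then 2 * pi else 0)"

lemma fourier_int:
  fixes a0 :: complex and a b :: "nat \<Rightarrow> complex"
  assumes zero: "\<forall>\<theta>\<in>{0..2*pi}. a0 + (\<Sum>k\<in>{1..n}. a k * ee (- int k) \<theta> + b k * ee (int k) \<theta>) = 0"
  shows "a0 * II l + (\<Sum>k\<in>{1..n}. a k * II (l - int k) + b k * II (l + int k)) = 0"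
proof -
  define G where "G \<theta> = a0 * ee l \<theta> + (\<Sum>k\<in>{1..n}. a k * ee (l - int k) \<theta> + b k * ee (l + int k) \<theta>)" for \<theta>
  have hG: "(G has_integral (a0 * II l + (\<Sum>k\<in>{1..n}. a k * II (l - int k) + b k * II (l + int k)))) {0..2*pi}"
    unfolding G_def II_def
    by (intro has_integral_add has_integral_sum has_integral_mult_right has_int_ee) auto
  have "G \<theta> = (a0 + (\<Sum>k\<in>{1..n}. a k * ee (- int k) \<theta> + b k * ee (int k) \<theta>)) * ee l \<theta>" for \<theta>
  proof -
    have "(a0 + (\<Sum>k\<in>{1..n}. a k * ee (- int k) \<theta> + b k * ee (int k) \<theta>)) * ee l \<theta>
        = a0 * ee l \<theta> + (\<Sum>k\<in>{1..n}. a k * (ee (- int k) \<theta> * ee l \<theta>) + b k * (ee (int k) \<theta> * ee l \<theta>))"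
      by (simp add: distrib_right sum_distrib_right mult.assoc)
    also have "\<dots> = G \<theta>" unfolding G_def ee_mult by (simp add: add.commute)
    finally show ?thesis by simp
  qed
  then have "\<theta> \<in> {0..2*pi} \<Longrightarrow> G \<theta> = 0" for \<theta> using zero by simp
  then have "((\<lambda>_. 0) has_integral (a0 * II l + (\<Sum>k\<in>{1..n}. a k * II (l - int k) + b k * II (l + int k)))) {0..2*pi}"
    using has_integral_eq[OF _ hG, of "\<lambda>_. 0"] by auto
  then show ?thesis by simp
qed

lemma fourier_unique:
  fixes a0 :: complex and a b :: "nat \<Rightarrow> complex"
  assumes zero: "\<forall>\<theta>\<in>{0..2*pi}. a0 + (\<Sum>k\<in>{1..n}. a k * ee (- int k) \<theta> + b k * ee (int k) \<theta>) = 0"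
  shows "a0 = 0" and "j \<in> {1..n} \<Longrightarrow> a j = 0" and "j \<in> {1..n} \<Longrightarrow> b j = 0"
proof -
  have "a0 * II 0 + (\<Sum>k\<in>{1..n}. a k * II (0 - int k) + b k * II (0 + int k)) = 0"
    by (rule fourier_int[OF zero])
  moreover have "(\<Sum>k\<in>{1..n}. a k * II (0 - int k) + b k * II (0 + int k)) = 0"
    by (intro sum.neutral) (auto simp: II_def)
  ultimately show "a0 = 0" by (simp add: II_def)
next
  assume j: "j \<in> {1..n}"
  have "a0 * II (int j) + (\<Sum>k\<in>{1..n}. a k * II (int j - int k) + b k * II (int j + int k)) = 0"
    by (rule fourier_int[OF zero])
  moreover have "(\<Sum>k\<in>{1..n}. a k * II (int j - int k) + b k * II (int j + int k))
      = (\<Sum>k\<in>{1..n}. if k = j then a k * (2 * pi) else 0)"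
    by (intro sum.cong refl) (auto simp: II_def)
  moreover have "a0 * II (int j) = 0" using j by (simp add: II_def)
  ultimately show "a j = 0" using j by simp
next
  assume j: "j \<in> {1..n}"
  have "a0 * II (- int j) + (\<Sum>k\<in>{1..n}. a k * II (- int j - int k) + b k * II (- int j + int k)) = 0"
    by (rule fourier_int[OF zero])
  moreover have "(\<Sum>k\<in>{1..n}. a k * II (- int j - int k) + b k * II (- int j + int k))
      = (\<Sum>k\<in>{1..n}. if k = j then b k * (2 * pi) else 0)"
    by (intro sum.cong refl) (auto simp: II_def)
  moreover have "a0 * II (- int j) = 0" using j by (simp add: II_def)
  ultimately show "b j = 0" using j by simp
qed

lemma exp_ee_minus: "exp (- \<i> * complex_of_real (\<theta> * real k)) = ee (- int k) \<theta>"
  unfolding ee_def by (simp add: ac_simps)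

lemma exp_ee_plus: "exp (\<i> * complex_of_real (\<theta> * real k)) = ee (int k) \<theta>"
  unfolding ee_def by (simp add: ac_simps)

lemma cos_ee: "complex_of_real (cos (\<theta> * real k)) = (ee (- int k) \<theta> + ee (int k) \<theta>) / 2"
proof -
  have "cos (complex_of_real (\<theta> * real k)) = (exp (\<i> * complex_of_real (\<theta> * real k)) + exp (- (\<i> * complex_of_real (\<theta> * real k)))) / 2"
    by (rule cos_exp_eq)
  then show ?thesis unfolding cos_of_real exp_ee_plus[symmetric] exp_ee_minus[symmetric]
    by (simp add: add.commute)
qed

lemma trig_p_cos: "trig_p n p \<theta> = 1 + (\<Sum>k\<in>{1..n}. p k * cos (\<theta> * real k))"
proof -
  have e: "exp (- \<i> * complex_of_real (\<theta> * real k)) + exp (\<i> * complex_of_real (\<theta> * real k))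
      = 2 * complex_of_real (cos (\<theta> * real k))" for k
    unfolding exp_ee_minus exp_ee_plus cos_ee by simp
  have "trig_p n p \<theta> = Re (1 + (1/2) * (\<Sum>k\<in>{1..n}. complex_of_real (p k) * (2 * complex_of_real (cos (\<theta> * real k)))))"
    unfolding trig_p_def e ..
  also have "\<dots> = Re (complex_of_real (1 + (\<Sum>k\<in>{1..n}. p k * cos (\<theta> * real k))))"
    by (simp add: sum_distrib_left)
  finally show ?thesis by simp
qed

lemma trig_p_ee: "complex_of_real (trig_p n p \<theta>) = 1 + (\<Sum>k\<in>{1..n}. complex_of_real (p k) / 2 * ee (- int k) \<theta> + complex_of_real (p k) / 2 * ee (int k) \<theta>)"
  unfolding trig_p_cos by (simp add: cos_ee field_simps)

lemma trig_p_comb: "trig_p n (\<lambda>k. (1 - t) * p1 k + t * p2 k) \<theta> = (1 - t) * trig_p n p1 \<theta> + t * trig_p n p2 \<theta>"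
proof -
  have "(\<Sum>k\<in>{1..n}. ((1 - t) * p1 k + t * p2 k) * cos (\<theta> * real k))
      = (1 - t) * (\<Sum>k\<in>{1..n}. p1 k * cos (\<theta> * real k)) + t * (\<Sum>k\<in>{1..n}. p2 k * cos (\<theta> * real k))"
    by (simp add: sum.distrib sum_distrib_left distrib_right mult.assoc)
  then show ?thesis unfolding trig_p_cos by (simp add: algebra_simps)
qed

definition Ef :: "nat \<Rightarrow> (nat \<Rightarrow> real) \<Rightarrow> (nat \<Rightarrow> real) \<Rightarrow> real \<Rightarrow> complex" where
  "Ef n c d \<theta> = complex_of_real (c 0) + (\<Sum>k\<in>{1..n}. complex_of_real (c k) / 2 * ee (- int k) \<theta> + complex_of_real (d k) / 2 * ee (int k) \<theta>)"

lemma trig_Q_entry: "trig_Q n Q \<theta> $ i $ j = Ef n (\<lambda>k. Q k $ i $ j) (\<lambda>k. Q k $ j $ i) \<theta>"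
  unfolding trig_Q_def Ef_def exp_ee_minus exp_ee_plus
  by (simp add: transpose_def sum_divide_distrib field_simps)

lemma Ef_lin: "Ef n (\<lambda>k. a * c1 k + b * c2 k) (\<lambda>k. a * d1 k + b * d2 k) \<theta>
    = complex_of_real a * Ef n c1 d1 \<theta> + complex_of_real b * Ef n c2 d2 \<theta>"
  unfolding Ef_def
  by (simp add: sum.distrib sum_distrib_left distrib_left distrib_right mult.assoc add_divide_distrib ac_simps)

lemma Ef_diff: "Ef n (\<lambda>k. c1 k - c2 k) (\<lambda>k. d1 k - d2 k) \<theta> = Ef n c1 d1 \<theta> - Ef n c2 d2 \<theta>"
  using Ef_lin[of n 1 c1 "-1" c2 d1 d2 \<theta>] by simp

lemma trig_Q_comb: "trig_Q n (\<lambda>k. (1 - t) *\<^sub>R Q1 k + t *\<^sub>R Q2 k) \<theta> = (1 - t) *\<^sub>R trig_Q n Q1 \<theta> + t *\<^sub>R trig_Q n Q2 \<theta>"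
  unfolding vec_eq_iff vector_add_component vector_scaleR_component trig_Q_entry
  using Ef_lin by (simp add: scaleR_conv_of_real)

lemma ee_2pi: "ee l (2 * pi) = 1"
proof -
  have "ee l (2 * pi) = exp (\<i> * (of_int l * (of_real pi * 2)))"
    unfolding ee_def by (simp add: ac_simps)
  also have "\<dots> = 1" by (rule exp_2pi_1_int)
  finally show ?thesis .
qed

lemma ee_zero: "ee l 0 = 1" by (simp add: ee_def)

lemma trig_p_2pi: "trig_p n p (2 * pi) = trig_p n p 0"
proof -
  have "cos (2 * pi * real k) = 1" for k :: nat
    using cos_2npi[of k] by (simp add: ac_simps)
  then show ?thesis unfolding trig_p_cos by simp
qed

lemma trig_Q_2pi: "trig_Q n Q (2 * pi) = trig_Q n Q 0"
  unfolding vec_eq_iff trig_Q_entry Ef_def ee_2pi ee_zero by simp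

lemma cont_trig_p: "continuous_on S (trig_p n p)"
  unfolding trig_p_cos [abs_def] by (intro continuous_intros)

lemma cont_trig_Q_entry: "continuous_on S (\<lambda>\<theta>. trig_Q n Q \<theta> $ i $ j)"
  unfolding trig_Q_entry Ef_def by (intro continuous_intros cont_ee)

lemma cont_det:
  fixes M :: "real \<Rightarrow> complex^'a^'a"
  assumes "\<And>i j. continuous_on S (\<lambda>\<theta>. M \<theta> $ i $ j)"
  shows "continuous_on S (\<lambda>\<theta>. det (M \<theta>))"
  unfolding det_def by (intro continuous_intros assms)

lemma cont_Re_det_trig_Q: "continuous_on S (\<lambda>\<theta>. Re (det (trig_Q n Q \<theta>)))"
  by (intro continuous_intros cont_det cont_trig_Q_entry)

lemma trig_p_inj:
  assumes eq: "\<forall>\<theta>\<in>{0..2*pi}. trig_p n p1 \<theta> = trig_p n p2 \<theta>" and k: "k \<in> {1..n}"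
  shows "p1 k = p2 k"
proof -
  define d where "d k = complex_of_real (p1 k - p2 k) / 2" for k
  have "\<forall>\<theta>\<in>{0..2*pi}. 0 + (\<Sum>k\<in>{1..n}. d k * ee (- int k) \<theta> + d k * ee (int k) \<theta>) = 0"
  proof
    fix \<theta> assume "\<theta> \<in> {0..2*pi}"
    then have "complex_of_real (trig_p n p1 \<theta>) - complex_of_real (trig_p n p2 \<theta>) = 0" using eq by simp
    then show "0 + (\<Sum>k\<in>{1..n}. d k * ee (- int k) \<theta> + d k * ee (int k) \<theta>) = 0"
      unfolding trig_p_ee d_def
      by (simp add: sum_subtractf[symmetric] diff_divide_distrib algebra_simps)
  qed
  from fourier_unique(2)[OF this k] show ?thesis unfolding d_def by simp
qed

lemma trig_Q_inj:
  assumes eq: "\<forall>\<theta>\<in>{0..2*pi}. trig_Q n Q1 \<theta> = trig_Q n Q2 \<theta>" and k: "k \<le> n"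
  shows "Q1 k = Q2 k"
proof -
  have "Q1 k $ i $ j = Q2 k $ i $ j" for i j
  proof -
    have "\<forall>\<theta>\<in>{0..2*pi}. Ef n (\<lambda>k. Q1 k $ i $ j - Q2 k $ i $ j) (\<lambda>k. Q1 k $ j $ i - Q2 k $ j $ i) \<theta> = 0"
      unfolding Ef_diff trig_Q_entry[symmetric] using eq by simp
    then have z: "\<forall>\<theta>\<in>{0..2*pi}. complex_of_real (Q1 0 $ i $ j - Q2 0 $ i $ j) +
        (\<Sum>k\<in>{1..n}. complex_of_real (Q1 k $ i $ j - Q2 k $ i $ j) / 2 * ee (- int k) \<theta>
           + complex_of_real (Q1 k $ j $ i - Q2 k $ j $ i) / 2 * ee (int k) \<theta>) = 0"
      unfolding Ef_def .
    show ?thesis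
    proof (cases "k = 0")
      case True
      from fourier_unique(1)[OF z] show ?thesis using True by simp
    next
      case False
      with k have "k \<in> {1..n}" by simp
      from fourier_unique(2)[OF z this] show ?thesis by simp
    qed
  qed
  then show ?thesis by (simp add: vec_eq_iff)
qed

lemma cont_Gf:
  fixes Q :: "nat \<Rightarrow> real^'m^'m"
  assumes pos: "\<forall>\<theta>\<in>{0..2*pi}. trig_p n p \<theta> > 0" and cp: "\<forall>\<theta>\<in>{0..2*pi}. cpos_def (trig_Q n Q \<theta>)"
  shows "continuous_on {0..2*pi} (\<lambda>\<theta>. Gf lam (trig_p n p \<theta>) (trig_Q n Q \<theta>))"
proof -
  have dpos: "\<forall>\<theta>\<in>{0..2*pi}. Re (det (trig_Q n Q \<theta>)) > 0" using cp det_Re by blast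
  show ?thesis unfolding Gf_def
    by (intro continuous_intros cont_trig_p cont_Re_det_trig_Q) (use pos dpos in force)+
qed

lemma trace_lin:
  fixes X Y R :: "real^'m^'m"
  shows "trace (transpose (a *\<^sub>R X + b *\<^sub>R Y) ** R) = a * trace (transpose X ** R) + b * trace (transpose Y ** R)"
  unfolding trace_def matrix_matrix_mult_def transpose_def
  by (simp add: sum.distrib sum_distrib_left distrib_right mult.assoc)

lemma J_tilde_eq:
  fixes Q :: "nat \<Rightarrow> real^'m^'m"
  assumes pos: "\<forall>\<theta>\<in>{0..2*pi}. trig_p n p \<theta> > 0" and cp: "\<forall>\<theta>\<in>{0..2*pi}. cpos_def (trig_Q n Q \<theta>)"
  shows "J_tilde n R c lam (p, Q) = integral {0..2*pi} (\<lambda>\<theta>. Gf lam (trig_p n p \<theta>) (trig_Q n Q \<theta>)) / (2*pi)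
     + ((\<Sum>k\<le>n. trace (transpose (Q k) ** R k)) - (\<Sum>k\<le>n. p k * c k))"
proof -
  define P where "P \<theta> = trig_p n p \<theta>" for \<theta>
  define m where "m = real CARD('m)"
  define H1 where "H1 \<theta> = P \<theta> * (m * ln (P \<theta>) - ln (Re (det (trig_Q n Q \<theta>)))) - m * P \<theta>" for \<theta>
  have dpos: "\<forall>\<theta>\<in>{0..2*pi}. Re (det (trig_Q n Q \<theta>)) > 0" using cp det_Re by blast
  have e1: "integral {0..2*pi} (\<lambda>\<theta>. P \<theta> * ln (Re (det (P \<theta> *\<^sub>R matrix_inv (trig_Q n Q \<theta>)))) - m * P \<theta>)
      = integral {0..2*pi} H1"
    by (rule integral_cong) (use pos cp in \<open>simp add: H1_def P_def m_def ln_det_matrix_inv\<close>)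
  have cH1: "continuous_on {0..2*pi} H1"
    unfolding H1_def P_def
    by (intro continuous_intros cont_trig_p cont_Re_det_trig_Q) (use pos dpos in force)+
  have cH2: "continuous_on {0..2*pi} (\<lambda>\<theta>. 1 / P \<theta>)"
    unfolding P_def by (intro continuous_intros cont_trig_p) (use pos in force)
  have iH1: "H1 integrable_on {0..2*pi}" by (rule integrable_continuous_interval[OF cH1])
  have iH2: "(\<lambda>\<theta>. lam * (1 / P \<theta>)) integrable_on {0..2*pi}"
    by (rule integrable_continuous_interval) (intro continuous_intros cH2)
  have e2: "integral {0..2*pi} (\<lambda>\<theta>. Gf lam (trig_p n p \<theta>) (trig_Q n Q \<theta>))
      = integral {0..2*pi} (\<lambda>\<theta>. H1 \<theta> + lam * (1 / P \<theta>))"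
    by (rule integral_cong) (simp add: Gf_def H1_def P_def m_def)
  also have "\<dots> = integral {0..2*pi} H1 + lam * integral {0..2*pi} (\<lambda>\<theta>. 1 / P \<theta>)"
    using integral_add[OF iH1 iH2] integral_mult_right[of "{0..2*pi}" lam "\<lambda>\<theta>. 1 / P \<theta>"] by simp
  finally have e3: "integral {0..2*pi} (\<lambda>\<theta>. Gf lam (trig_p n p \<theta>) (trig_Q n Q \<theta>))
      = integral {0..2*pi} H1 + lam * integral {0..2*pi} (\<lambda>\<theta>. 1 / P \<theta>)" .
  show ?thesis
    unfolding J_tilde_def J_def g_def circ_int_def Let_def fst_conv snd_conv
    unfolding P_def[symmetric] m_def[symmetric] e1 e3[unfolded P_def[symmetric]]
    by (simp add: add_divide_distrib)
qed

lemma integral_strict: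
  fixes f g :: "real \<Rightarrow> real"
  assumes cf: "continuous_on {a..b} f" and cg: "continuous_on {a..b} g" and ab: "a < b"
    and le: "\<And>x. x \<in> {a..b} \<Longrightarrow> f x \<le> g x" and x0: "x0 \<in> {a..b}" "f x0 < g x0"
  shows "integral {a..b} f < integral {a..b} g"
proof -
  have ch: "continuous_on {a..b} (\<lambda>x. g x - f x)" using cf cg by (intro continuous_intros)
  have nn: "\<And>x. x \<in> {a..b} \<Longrightarrow> g x - f x \<ge> 0" using le by simp
  have "integral {a..b} (\<lambda>x. g x - f x) \<ge> 0"
    by (rule integral_nonneg[OF integrable_continuous_interval[OF ch]]) (use nn in auto)
  moreover have "integral {a..b} (\<lambda>x. g x - f x) \<noteq> 0"
    using integral_eq_0_iff[OF ch ab nn] x0 by auto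
  moreover have "integral {a..b} (\<lambda>x. g x - f x) = integral {a..b} g - integral {a..b} f"
    by (rule integral_diff[OF integrable_continuous_interval[OF cg] integrable_continuous_interval[OF cf]])
  ultimately show ?thesis by linarith
qed

lemma closed_ext:
  assumes "\<forall>\<theta>\<in>{0..<2*pi}. P \<theta>" "P (2*pi) = P 0"
  shows "\<forall>\<theta>\<in>{0..2*pi}. P \<theta>"
proof
  fix \<theta> :: real assume th: "\<theta> \<in> {0..2*pi}"
  show "P \<theta>"
  proof (cases "\<theta> = 2*pi")
    case True
    have "(0::real) \<in> {0..<2*pi}" by simp
    then show ?thesis using assms True by simp
  next
    case False then show ?thesis using assms th by auto
  qed
qed

theorem proposition1:
  fixes n :: nat and E :: "('m::finite \<times> 'm) set"
    and R :: "nat \<Rightarrow> real^'m^'m" and c :: "nat \<Rightarrow> real" and lam :: real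
  assumes "n \<ge> 1"
    and "\<forall>j h. (j, h) \<in> E \<longrightarrow> (h, j) \<in> E"
    and "\<forall>j. (j, j) \<in> E"
    and "transpose (R 0) = R 0"
    and "lam > 0"
  shows "strict_convex_on_coeffs (Bo n \<times> Bm n E) (J_tilde n R c lam)"
  unfolding strict_convex_on_coeffs_def
proof (intro ballI impI allI)
  fix x y :: "(nat \<Rightarrow> real) \<times> (nat \<Rightarrow> real^'m^'m)" and t :: real
  assume x: "x \<in> Bo n \<times> Bm n E" and y: "y \<in> Bo n \<times> Bm n E" and xy: "x \<noteq> y" and t: "0 < t \<and> t < 1"
  have lam: "lam > 0" using assms(5) .
  obtain p1 Q1 where x_eq: "x = (p1, Q1)" by (cases x)
  obtain p2 Q2 where y_eq: "y = (p2, Q2)" by (cases y)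
  have p1: "p1 0 = 1" "\<forall>k>n. p1 k = 0" "\<forall>\<theta>\<in>{0..<2*pi}. trig_p n p1 \<theta> > 0"
    using x unfolding x_eq Bo_def by auto
  have p2: "p2 0 = 1" "\<forall>k>n. p2 k = 0" "\<forall>\<theta>\<in>{0..<2*pi}. trig_p n p2 \<theta> > 0"
    using y unfolding y_eq Bo_def by auto
  have Q1: "\<forall>k>n. Q1 k = 0" "\<forall>\<theta>\<in>{0..<2*pi}. cpos_def (trig_Q n Q1 \<theta>)"
    using x unfolding x_eq Bm_def by auto
  have Q2: "\<forall>k>n. Q2 k = 0" "\<forall>\<theta>\<in>{0..<2*pi}. cpos_def (trig_Q n Q2 \<theta>)"
    using y unfolding y_eq Bm_def by auto
  have pos1: "\<forall>\<theta>\<in>{0..2*pi}. trig_p n p1 \<theta> > 0"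
    by (rule closed_ext[OF p1(3)]) (simp add: trig_p_2pi)
  have pos2: "\<forall>\<theta>\<in>{0..2*pi}. trig_p n p2 \<theta> > 0"
    by (rule closed_ext[OF p2(3)]) (simp add: trig_p_2pi)
  have cp1: "\<forall>\<theta>\<in>{0..2*pi}. cpos_def (trig_Q n Q1 \<theta>)"
    by (rule closed_ext[OF Q1(2)]) (simp add: trig_Q_2pi)
  have cp2: "\<forall>\<theta>\<in>{0..2*pi}. cpos_def (trig_Q n Q2 \<theta>)"
    by (rule closed_ext[OF Q2(2)]) (simp add: trig_Q_2pi)
  define pm where "pm = (\<lambda>k. (1 - t) * p1 k + t * p2 k)"
  define Qm where "Qm = (\<lambda>k. (1 - t) *\<^sub>R Q1 k + t *\<^sub>R Q2 k)"
  have tpm: "trig_p n pm \<theta> = (1 - t) * trig_p n p1 \<theta> + t * trig_p n p2 \<theta>" for \<theta>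
    unfolding pm_def by (rule trig_p_comb)
  have tQm: "trig_Q n Qm \<theta> = (1 - t) *\<^sub>R trig_Q n Q1 \<theta> + t *\<^sub>R trig_Q n Q2 \<theta>" for \<theta>
    unfolding Qm_def by (rule trig_Q_comb)
  have posm: "\<forall>\<theta>\<in>{0..2*pi}. trig_p n pm \<theta> > 0"
  proof
    fix \<theta> :: real assume "\<theta> \<in> {0..2*pi}"
    then have "trig_p n p1 \<theta> > 0" "trig_p n p2 \<theta> > 0" using pos1 pos2 by auto
    then show "trig_p n pm \<theta> > 0" unfolding tpm using t
      by (smt (verit) mult_pos_pos)
  qed
  have cpm: "\<forall>\<theta>\<in>{0..2*pi}. cpos_def (trig_Q n Qm \<theta>)"
    unfolding tQm using cp1 cp2 t by (auto intro: cpos_comb)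
  define G1 where "G1 \<theta> = Gf lam (trig_p n p1 \<theta>) (trig_Q n Q1 \<theta>)" for \<theta>
  define G2 where "G2 \<theta> = Gf lam (trig_p n p2 \<theta>) (trig_Q n Q2 \<theta>)" for \<theta>
  define Gm where "Gm \<theta> = Gf lam (trig_p n pm \<theta>) (trig_Q n Qm \<theta>)" for \<theta>
  have cG1: "continuous_on {0..2*pi} G1" unfolding G1_def by (rule cont_Gf[OF pos1 cp1])
  have cG2: "continuous_on {0..2*pi} G2" unfolding G2_def by (rule cont_Gf[OF pos2 cp2])
  have cGm: "continuous_on {0..2*pi} Gm" unfolding Gm_def by (rule cont_Gf[OF posm cpm])
  have cGc: "continuous_on {0..2*pi} (\<lambda>\<theta>. (1 - t) * G1 \<theta> + t * G2 \<theta>)"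
    by (intro continuous_intros cG1 cG2)
  have ptw: "Gm \<theta> \<le> (1 - t) * G1 \<theta> + t * G2 \<theta>" if "\<theta> \<in> {0..2*pi}" for \<theta>
    unfolding Gm_def G1_def G2_def tpm tQm
    using pointwise(1)[of "trig_p n p1 \<theta>" "trig_p n p2 \<theta>" "trig_Q n Q1 \<theta>" "trig_Q n Q2 \<theta>" t lam]
      pos1 pos2 cp1 cp2 that t lam by auto
  have "\<exists>\<theta>0\<in>{0..2*pi}. trig_p n p1 \<theta>0 \<noteq> trig_p n p2 \<theta>0 \<or> trig_Q n Q1 \<theta>0 \<noteq> trig_Q n Q2 \<theta>0"
  proof (rule ccontr)
    assume "\<not> ?thesis"
    then have eqp: "\<forall>\<theta>\<in>{0..2*pi}. trig_p n p1 \<theta> = trig_p n p2 \<theta>"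
      and eqQ: "\<forall>\<theta>\<in>{0..2*pi}. trig_Q n Q1 \<theta> = trig_Q n Q2 \<theta>" by auto
    have "p1 = p2"
    proof
      fix k
      show "p1 k = p2 k"
      proof (cases "k = 0")
        case True then show ?thesis using p1 p2 by simp
      next
        case False
        show ?thesis
        proof (cases "k \<le> n")
          case True
          with False have "k \<in> {1..n}" by simp
          then show ?thesis by (rule trig_p_inj[OF eqp])
        next
          case False then show ?thesis using p1 p2 by simp
        qed
      qed
    qed
    moreover have "Q1 = Q2"
    proof
      fix k
      show "Q1 k = Q2 k"
      proof (cases "k \<le> n")
        case True then show ?thesis by (rule trig_Q_inj[OF eqQ])
      next
        case False then show ?thesis using Q1 Q2 by simp
      qed
    qed
    ultimately show False using xy unfolding x_eq y_eq by simp
  qed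
  then obtain \<theta>0 where th0: "\<theta>0 \<in> {0..2*pi}"
    and ne: "trig_p n p1 \<theta>0 \<noteq> trig_p n p2 \<theta>0 \<or> trig_Q n Q1 \<theta>0 \<noteq> trig_Q n Q2 \<theta>0" by blast
  have strict0: "Gm \<theta>0 < (1 - t) * G1 \<theta>0 + t * G2 \<theta>0"
    unfolding Gm_def G1_def G2_def tpm tQm
    using pointwise(2)[of "trig_p n p1 \<theta>0" "trig_p n p2 \<theta>0" "trig_Q n Q1 \<theta>0" "trig_Q n Q2 \<theta>0" t lam]
      pos1 pos2 cp1 cp2 th0 t lam ne by auto
  have intlt: "integral {0..2*pi} Gm < integral {0..2*pi} (\<lambda>\<theta>. (1 - t) * G1 \<theta> + t * G2 \<theta>)"
    by (rule integral_strict[OF cGm cGc _ ptw th0 strict0]) simp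
  have intc: "integral {0..2*pi} (\<lambda>\<theta>. (1 - t) * G1 \<theta> + t * G2 \<theta>)
      = (1 - t) * integral {0..2*pi} G1 + t * integral {0..2*pi} G2"
  proof -
    have i1: "(\<lambda>\<theta>. (1 - t) * G1 \<theta>) integrable_on {0..2*pi}"
      by (rule integrable_continuous_interval) (intro continuous_intros cG1)
    have i2: "(\<lambda>\<theta>. t * G2 \<theta>) integrable_on {0..2*pi}"
      by (rule integrable_continuous_interval) (intro continuous_intros cG2)
    show ?thesis using integral_add[OF i1 i2] by simp
  qed
  define L1 where "L1 = (\<Sum>k\<le>n. trace (transpose (Q1 k) ** R k)) - (\<Sum>k\<le>n. p1 k * c k)"
  define L2 where "L2 = (\<Sum>k\<le>n. trace (transpose (Q2 k) ** R k)) - (\<Sum>k\<le>n. p2 k * c k)"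
  have Lm: "(\<Sum>k\<le>n. trace (transpose (Qm k) ** R k)) - (\<Sum>k\<le>n. pm k * c k) = (1 - t) * L1 + t * L2"
  proof -
    have "(\<Sum>k\<le>n. trace (transpose (Qm k) ** R k))
        = (1 - t) * (\<Sum>k\<le>n. trace (transpose (Q1 k) ** R k)) + t * (\<Sum>k\<le>n. trace (transpose (Q2 k) ** R k))"
      unfolding Qm_def trace_lin by (simp add: sum.distrib sum_distrib_left)
    moreover have "(\<Sum>k\<le>n. pm k * c k) = (1 - t) * (\<Sum>k\<le>n. p1 k * c k) + t * (\<Sum>k\<le>n. p2 k * c k)"
      unfolding pm_def by (simp add: sum.distrib sum_distrib_left distrib_right mult.assoc)
    ultimately show ?thesis unfolding L1_def L2_def by (simp add: algebra_simps)
  qed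
  have J1: "J_tilde n R c lam x = integral {0..2*pi} G1 / (2*pi) + L1"
    unfolding x_eq G1_def L1_def by (rule J_tilde_eq[OF pos1 cp1])
  have J2: "J_tilde n R c lam y = integral {0..2*pi} G2 / (2*pi) + L2"
    unfolding y_eq G2_def L2_def by (rule J_tilde_eq[OF pos2 cp2])
  have Jm: "J_tilde n R c lam (pm, Qm) = integral {0..2*pi} Gm / (2*pi) + ((1 - t) * L1 + t * L2)"
    unfolding Gm_def Lm[symmetric] by (rule J_tilde_eq[OF posm cpm])
  have arg: "(\<lambda>k. (1 - t) * fst x k + t * fst y k, \<lambda>k. (1 - t) *\<^sub>R snd x k + t *\<^sub>R snd y k) = (pm, Qm)"
    unfolding x_eq y_eq pm_def Qm_def by simp
  have div: "integral {0..2*pi} Gm / (2*pi) < ((1 - t) * integral {0..2*pi} G1 + t * integral {0..2*pi} G2) / (2*pi)"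
    using intlt intc by (simp add: divide_strict_right_mono)
  have rhs: "(1 - t) * (integral {0..2*pi} G1 / (2*pi) + L1) + t * (integral {0..2*pi} G2 / (2*pi) + L2)
      = ((1 - t) * integral {0..2*pi} G1 + t * integral {0..2*pi} G2) / (2*pi) + ((1 - t) * L1 + t * L2)"
    by (simp add: field_simps)
  show "J_tilde n R c lam (\<lambda>k. (1 - t) * fst x k + t * fst y k, \<lambda>k. (1 - t) *\<^sub>R snd x k + t *\<^sub>R snd y k)
      < (1 - t) * J_tilde n R c lam x + t * J_tilde n R c lam y"
    unfolding arg Jm J1 J2 rhs using div by linarith
qed

end
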